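(* Let $U(x)=\big(|x|_1-\tfrac{d\lambda'}{\delta'}\big)^2$ and $U^p:=(U)^p$. Then for every $p\in\mathbb{N}$ and every $x\in\mathbb{R}_+^d$ at which $\gamma(x)$ is defined, $\nabla U^p(x)\cdot\gamma(x)\le 0$.
   Context: Fix an integer $d\ge 2$ and constants $\kappa',\lambda',\delta'>0$. Indices are cyclic modulo $d$: $x_0:=x_d$, $x_{d+1}:=x_1$. $\mathbb{R}_+^d=[0,\infty)^d$, $|x|_1=\sum_i|x_i|$, $|\cdot|$ the Euclidean norm, $e_k$ the standard basis. $b(x)=\sum_{k=1}^d e_k\big(\kappa'(x_{k-1}-x_{k+1})x_k+\lambda'-\delta'x_k\big)$ and $\gamma(x)=b(x)/|b(x)|$ (defined wherever $b(x)\ne0$, in particular on all of $\partial\mathbb{R}_+^d$). *)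

theory Defs
  imports "HOL-Analysis.Analysis"
begin

text \<open>Coordinates of \<open>real^'n\<close> are labelled \<open>x_1,...,x_d\<close> (d = CARD('n)) through a
  bijection \<open>e\<close> from \<open>{..<d}\<close> onto the index type: label k (0-based) is the
  coordinate \<open>x $ e k\<close>. Indices are cyclic modulo d.\<close>

definition drift :: "(nat \<Rightarrow> 'n::finite) \<Rightarrow> real \<Rightarrow> real \<Rightarrow> real \<Rightarrow> real^'n \<Rightarrow> real^'n" where
  "drift e kap lam del x =
     (let d = CARD('n) in
      \<Sum>k<d. (kap * (x $ e ((k + d - 1) mod d) - x $ e ((k + 1) mod d)) * x $ e k
                  + lam - del * x $ e k) *\<^sub>R (axis (e k) 1 :: real^'n))"

definition refl_dir :: "(nat \<Rightarrow> 'n::finite) \<Rightarrow> real \<Rightarrow> real \<Rightarrow> real \<Rightarrow> real^'n \<Rightarrow> real^'n" where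
  "refl_dir e kap lam del x = (1 / norm (drift e kap lam del x)) *\<^sub>R drift e kap lam del x"

definition norm1 :: "real^'n \<Rightarrow> real" where
  "norm1 x = (\<Sum>i\<in>UNIV. \<bar>x $ i\<bar>)"

definition Ufun :: "real \<Rightarrow> real \<Rightarrow> real^'n \<Rightarrow> real" where
  "Ufun lam del x = (norm1 x - real CARD('n) * lam / del)\<^sup>2"

definition orthant :: "(real^'n) set" where
  "orthant = {x. \<forall>i. 0 \<le> x $ i}"

end

theory Submission
  imports Defs
begin

lemma cyc_sum:
  fixes a :: "nat \<Rightarrow> real"
  shows "(\<Sum>k<Suc m. a ((k + Suc m - 1) mod Suc m) * a k) = (\<Sum>k<Suc m. a ((k + 1) mod Suc m) * a k)"
proof -
  have A: "(\<Sum>k<Suc m. a ((k + Suc m - 1) mod Suc m) * a k)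
      = a ((0 + Suc m - 1) mod Suc m) * a 0 + (\<Sum>k<m. a ((Suc k + Suc m - 1) mod Suc m) * a (Suc k))"
    by (rule sum.lessThan_Suc_shift)
  have B: "(\<Sum>k<m. a ((Suc k + Suc m - 1) mod Suc m) * a (Suc k)) = (\<Sum>k<m. a k * a (Suc k))"
  proof (rule sum.cong)
    fix k assume k: "k \<in> {..<m}"
    have "Suc k + Suc m - 1 = k + Suc m" by simp
    then have "(Suc k + Suc m - 1) mod Suc m = k mod Suc m" by (simp only: mod_add_self2)
    also have "\<dots> = k" using k by simp
    finally show "a ((Suc k + Suc m - 1) mod Suc m) * a (Suc k) = a k * a (Suc k)" by simp
  qed simp
  have C: "(\<Sum>k<Suc m. a ((k + 1) mod Suc m) * a k) = (\<Sum>k<m. a ((k + 1) mod Suc m) * a k) + a ((m+1) mod Suc m) * a m"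
    by (rule sum.lessThan_Suc)
  have D: "(\<Sum>k<m. a ((k + 1) mod Suc m) * a k) = (\<Sum>k<m. a k * a (Suc k))"
    by (rule sum.cong) auto
  have E: "(0 + Suc m - 1) mod Suc m = m" by simp
  have F: "(m+1) mod Suc m = 0" by simp
  show ?thesis unfolding A B C D E F by simp
qed

lemma swapdelta:
  fixes f :: "nat \<Rightarrow> real" and e :: "nat \<Rightarrow> 'n::finite"
  shows "(\<Sum>i\<in>(UNIV::'n set). \<Sum>k\<in>K. f k * (if i = e k then 1 else 0)) = (\<Sum>k\<in>K. f k)"
proof -
  have "(\<Sum>i\<in>(UNIV::'n set). \<Sum>k\<in>K. f k * (if i = e k then 1 else 0))
      = (\<Sum>k\<in>K. \<Sum>i\<in>(UNIV::'n set). f k * (if i = e k then 1 else 0))"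
    by (rule sum.swap)
  also have "\<dots> = (\<Sum>k\<in>K. f k)"
  proof (rule sum.cong)
    fix k
    have "(\<Sum>i\<in>(UNIV::'n set). f k * (if i = e k then 1 else 0)) = f k * (\<Sum>i\<in>(UNIV::'n set). (if i = e k then 1 else 0))"
      by (rule sum_distrib_left[symmetric])
    also have "\<dots> = f k" by simp
    finally show "(\<Sum>i\<in>(UNIV::'n set). f k * (if i = e k then 1 else 0)) = f k" .
  qed simp
  finally show ?thesis .
qed

theorem lemma4p1:
  fixes e :: "nat \<Rightarrow> 'n::finite" and kap lam del :: real and p :: nat and x :: "real^'n"
  assumes "CARD('n) \<ge> 2"
    and "bij_betw e {..<CARD('n)} UNIV"
    and "kap > 0" and "lam > 0" and "del > 0"
    and "x \<in> orthant"
    and "drift e kap lam del x \<noteq> 0"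
  shows "(\<exists>G. ((\<lambda>y. Ufun lam del y ^ p) has_derivative (\<lambda>h. G \<bullet> h)) (at x within orthant))
       \<and> (\<forall>G. ((\<lambda>y. Ufun lam del y ^ p) has_derivative (\<lambda>h. G \<bullet> h)) (at x within orthant)
              \<longrightarrow> G \<bullet> refl_dir e kap lam del x \<le> 0)"
proof -
  define c where "c = real CARD('n) * lam / del"
  define ones :: "real^'n" where "ones = (\<chi> i. 1)"
  define s where "s = ones \<bullet> x"
  define G0 where "G0 = (real p * ((s - c)\<^sup>2) ^ (p - 1) * (2 * (s - c))) *\<^sub>R ones"
  have onesh: "ones \<bullet> h = (\<Sum>i\<in>UNIV. h $ i)" for h :: "real^'n"
    by (simp add: ones_def inner_vec_def)
  define g where "g = (\<lambda>y::real^'n. ((ones \<bullet> y - c)\<^sup>2) ^ p)"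
  have gd: "(g has_derivative (\<lambda>h. G0 \<bullet> h)) (at x within orthant)"
    unfolding g_def
    apply (rule has_derivative_eq_rhs)
     apply (rule derivative_eq_intros | simp)+
    apply (rule ext)
    apply (simp add: G0_def s_def algebra_simps power2_eq_square)
    done
  have fg: "Ufun lam del y ^ p = g y" if "y \<in> orthant" for y
  proof -
    have "norm1 y = ones \<bullet> y" using that
      by (simp add: norm1_def onesh orthant_def)
    then show ?thesis by (simp add: Ufun_def g_def c_def)
  qed
  have fd: "((\<lambda>y. Ufun lam del y ^ p) has_derivative (\<lambda>h. G0 \<bullet> h)) (at x within orthant)"
    by (rule has_derivative_transform_within[OF gd zero_less_one assms(6)]) (simp add: fg)
  define b where "b = drift e kap lam del x"
  define d where "d = CARD('n)"
  define a where "a = (\<lambda>k. x $ e k)"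
  have bsum: "ones \<bullet> b = (\<Sum>k<d. kap * (a ((k + d - 1) mod d) - a ((k + 1) mod d)) * a k + lam - del * a k)"
    apply (simp add: b_def drift_def onesh d_def a_def Let_def sum_component axis_def)
    apply (rule swapdelta)
    done
  obtain m where dm: "d = Suc m" using assms(1) unfolding d_def by (metis Suc_pred not_numeral_le_zero not_gr0)
  have cyc: "(\<Sum>k<d. (a ((k + d - 1) mod d) - a ((k + 1) mod d)) * a k) = 0"
    using cyc_sum[of a m] by (simp add: dm left_diff_distrib sum_subtractf)
  have sa: "(\<Sum>k<d. a k) = s"
  proof -
    have "(\<Sum>k<d. a k) = (\<Sum>i\<in>UNIV. x $ i)"
      unfolding a_def d_def by (rule sum.reindex_bij_betw[OF assms(2)])
    then show ?thesis by (simp add: s_def onesh)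
  qed
  have "ones \<bullet> b = kap * (\<Sum>k<d. (a ((k + d - 1) mod d) - a ((k + 1) mod d)) * a k)
      + real d * lam - del * (\<Sum>k<d. a k)"
    unfolding bsum by (simp add: sum.distrib sum_subtractf sum_distrib_left mult.assoc)
  then have ob0: "ones \<bullet> b = real d * lam - del * s"
    using cyc sa by simp
  have ob: "ones \<bullet> b = - del * (s - c)"
    unfolding ob0 c_def d_def using assms(5) by (simp add: algebra_simps)
  have G0b: "G0 \<bullet> b \<le> 0"
  proof -
    have "G0 \<bullet> b = - (2 * real p * del) * (((s - c)\<^sup>2) ^ (p - 1) * (s - c)\<^sup>2)"
      by (simp add: G0_def ob power2_eq_square algebra_simps)
    also have "\<dots> \<le> 0" using assms(5) by (intro mult_nonpos_nonneg) auto
    finally show ?thesis .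
  qed
  show ?thesis
  proof (intro conjI exI allI impI)
    show "((\<lambda>y. Ufun lam del y ^ p) has_derivative (\<lambda>h. G0 \<bullet> h)) (at x within orthant)" by (rule fd)
    fix G assume GD: "((\<lambda>y. Ufun lam del y ^ p) has_derivative (\<lambda>h. G \<bullet> h)) (at x within orthant)"
    have "(\<lambda>h. G \<bullet> h) = (\<lambda>h. G0 \<bullet> h)"
    proof (rule frechet_derivative_unique_within[OF GD fd])
      fix i :: "real^'n" and r :: real assume i: "i \<in> Basis" and r: "r > 0"
      then obtain j where ij: "i = axis j 1" by (auto simp: Basis_vec_def)
      show "\<exists>d. 0 < \<bar>d\<bar> \<and> \<bar>d\<bar> < r \<and> x + d *\<^sub>R i \<in> orthant"
        using r assms(6) by (intro exI[of _ "r/2"]) (auto simp: ij orthant_def axis_def)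
    qed
    then have "G \<bullet> b = G0 \<bullet> b" by metis
    then have "G \<bullet> b \<le> 0" using G0b by simp
    then show "G \<bullet> refl_dir e kap lam del x \<le> 0"
      by (simp add: refl_dir_def b_def[symmetric] divide_nonpos_nonneg)
  qed
qed

end
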